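(* For sufficiently large $n$, every integer $k \ge 4\log_2 n+2$, and every tournament $T_k$ on $k$ vertices, Breaker has a winning strategy in the $(2:1)$ Maker–Breaker game $\mathcal{H}(T_k,n)$.
   Context: The game $\mathcal{H}(T_k,n)=(X,\mathcal{F}(T_k))$ has board $X=\{(u,v): u,v\in V(K_n),\ u\ne v\}$, the set of all $n(n-1)$ ordered pairs of distinct vertices. Its winning sets are $\mathcal{F}(T_k)=\{S\subseteq X : S \text{ is (the arc set of) a copy of } T_k\}$. In the $(2:1)$ Maker–Breaker game on $(X,\mathcal{F})$, the players alternately claim unclaimed elements of $X$, Maker claiming $2$ elements per round and Breaker $1$ element per round. Maker wins if she claims all elements of some winning set; otherwise Breaker wins. A tournament is a digraph with exactly one directed edge between each pair of distinct vertices. *)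

theory Defs
  imports Complex_Main
begin

definition tournament :: "nat \<Rightarrow> (nat \<times> nat) set \<Rightarrow> bool" where
  "tournament k T \<longleftrightarrow> T \<subseteq> {0..<k} \<times> {0..<k} \<and> (\<forall>a. (a, a) \<notin> T) \<and>
     (\<forall>a<k. \<forall>b<k. a \<noteq> b \<longrightarrow> ((a, b) \<in> T \<longleftrightarrow> (b, a) \<notin> T))"

text \<open>Board of H(T_k,n): ordered pairs of distinct vertices of K_n, with V(K_n) = {0..<n}.\<close>
definition board :: "nat \<Rightarrow> (nat \<times> nat) set" where
  "board n = {(u, v). u < n \<and> v < n \<and> u \<noteq> v}"

definition copies :: "nat \<Rightarrow> nat \<Rightarrow> (nat \<times> nat) set \<Rightarrow> (nat \<times> nat) set set" where
  "copies n k T = {(\<lambda>(a, b). (f a, f b)) ` T | f. inj_on f {0..<k} \<and> f ` {0..<k} \<subseteq> {0..<n}}"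

text \<open>(2:1) Maker-Breaker game on board X with winning sets F.
  breaker_wins X F M B: in the position where Maker owns M, Breaker owns B and it is
  Maker's turn, Breaker has a winning strategy. Maker claims 2 free elements (or all
  remaining ones if fewer than 2 are left), then Breaker claims 1 free element.
  Maker wins once she owns a winning set; Breaker wins if the board is exhausted
  otherwise.\<close>
inductive breaker_wins :: "'a set \<Rightarrow> 'a set set \<Rightarrow> 'a set \<Rightarrow> 'a set \<Rightarrow> bool"
  for X :: "'a set" and F :: "'a set set" where
  step: "(\<forall>A. A \<subseteq> X - (M \<union> B) \<and> card A = min 2 (card (X - (M \<union> B))) \<longrightarrow>
            (\<not> (\<exists>W\<in>F. W \<subseteq> M \<union> A)) \<and>
            (X - (M \<union> A \<union> B) = {} \<or>
             (\<exists>e \<in> X - (M \<union> A \<union> B). breaker_wins X F (M \<union> A) (insert e B))))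
         \<Longrightarrow> breaker_wins X F M B"

end

theory Submission
  imports Defs "HOL-Library.FuncSet"
begin


definition phi :: "'a set \<Rightarrow> 'a set \<Rightarrow> real" where
 "phi M W = sqrt 2 ^ card (W \<inter> M) / sqrt 2 ^ card W"
definition live :: "'a set set \<Rightarrow> 'a set \<Rightarrow> 'a set set" where "live F B = {W\<in>F. W \<inter> B = {}}"
definition Pot :: "'a set set \<Rightarrow> 'a set \<Rightarrow> 'a set \<Rightarrow> real" where "Pot F M B = (\<Sum>W\<in>live F B. phi M W)"
definition Dg :: "'a set set \<Rightarrow> 'a set \<Rightarrow> 'a set \<Rightarrow> 'a \<Rightarrow> real" where "Dg F M B a = (\<Sum>W\<in>{W\<in>live F B. a \<in> W}. phi M W)"
definition Inv :: "'a set \<Rightarrow> 'a set set \<Rightarrow> 'a set \<Rightarrow> 'a set \<Rightarrow> bool" where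
  "Inv X F M B \<longleftrightarrow> Pot F M B < 1 \<and> (\<forall>a\<in>X-(M\<union>B). Pot F M B + Dg F M B a < 1)"

lemma phi_nonneg: "phi M W \<ge> 0" by (simp add: phi_def)

lemma Dg_nonneg: "Dg F M B a \<ge> 0" unfolding Dg_def by (simp add: sum_nonneg phi_nonneg)

lemma phi_one: "W \<subseteq> M \<Longrightarrow> phi M W = 1"
  by (simp add: phi_def Int_absorb2)

lemma Pot_ge: assumes "finite F" "W \<in> F" "W \<inter> B = {}" "W \<subseteq> M" shows "Pot F M B \<ge> 1"
proof -
  have "W \<in> live F B" using assms by (simp add: live_def)
  moreover have "finite (live F B)" using assms by (simp add: live_def)
  ultimately have "phi M W \<le> Pot F M B" unfolding Pot_def
    by (meson member_le_sum phi_nonneg)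
  thus ?thesis using phi_one[OF assms(4)] by simp
qed

lemma phi_union: assumes "A \<inter> M = {}" "finite W"
  shows "phi (M \<union> A) W = phi M W * sqrt 2 ^ card (W \<inter> A)"
proof -
  have "W \<inter> (M \<union> A) = (W \<inter> M) \<union> (W \<inter> A)" by blast
  moreover have "card ((W \<inter> M) \<union> (W \<inter> A)) = card (W \<inter> M) + card (W \<inter> A)"
    using assms by (intro card_Un_disjoint) auto
  ultimately show ?thesis by (simp add: phi_def power_add)
qed

lemma sq_ineq: "x \<le> 2 \<Longrightarrow> sqrt 2 ^ x \<le> 1 + real x / 2"
proof -
  assume "x \<le> 2"
  hence "x = 0 \<or> x = 1 \<or> x = 2" by auto
  moreover have "sqrt (2::real) \<le> 3/2" by (rule real_le_lsqrt) (auto simp: power2_eq_square)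
  ultimately show ?thesis by auto
qed

lemma Dg_sum: assumes "finite A" "finite F"
  shows "(\<Sum>a\<in>A. Dg F M B a) = (\<Sum>W\<in>live F B. phi M W * real (card (W \<inter> A)))"
proof -
  have fl: "finite (live F B)" using assms by (simp add: live_def)
  have "(\<Sum>a\<in>A. Dg F M B a) = (\<Sum>a\<in>A. \<Sum>W\<in>live F B. if a \<in> W then phi M W else 0)"
    unfolding Dg_def using fl by (simp add: sum.inter_filter)
  also have "\<dots> = (\<Sum>W\<in>live F B. \<Sum>a\<in>A. if a \<in> W then phi M W else 0)"
    by (rule sum.swap)
  also have "\<dots> = (\<Sum>W\<in>live F B. phi M W * real (card (W \<inter> A)))"
  proof (rule sum.cong[OF refl])
    fix W
    have "(\<Sum>a\<in>A. if a \<in> W then phi M W else 0) = (\<Sum>a\<in>{a\<in>A. a \<in> W}. phi M W)"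
      using assms by (simp only: sum.inter_filter)
    also have "{a\<in>A. a \<in> W} = W \<inter> A" by blast
    finally show "(\<Sum>a\<in>A. if a \<in> W then phi M W else 0) = phi M W * real (card (W \<inter> A))"
      by simp
  qed
  finally show ?thesis .
qed

lemma maker_step: assumes "finite A" "finite F" "card A \<le> 2" "A \<inter> M = {}" "\<forall>W\<in>F. finite W"
  shows "Pot F (M \<union> A) B \<le> Pot F M B + (\<Sum>a\<in>A. Dg F M B a) / 2"
proof -
  have "Pot F (M \<union> A) B = (\<Sum>W\<in>live F B. phi M W * sqrt 2 ^ card (W \<inter> A))"
    unfolding Pot_def using assms by (intro sum.cong refl phi_union) (auto simp: live_def)
  also have "\<dots> \<le> (\<Sum>W\<in>live F B. phi M W + phi M W * real (card (W \<inter> A)) / 2)"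
  proof (rule sum_mono)
    fix W
    have "card (W \<inter> A) \<le> 2" using assms by (meson card_mono inf_le2 le_trans)
    hence "sqrt 2 ^ card (W \<inter> A) \<le> 1 + real (card (W \<inter> A)) / 2" by (rule sq_ineq)
    from mult_left_mono[OF this phi_nonneg]
    show "phi M W * sqrt 2 ^ card (W \<inter> A) \<le> phi M W + phi M W * real (card (W \<inter> A)) / 2"
      by (simp add: algebra_simps)
  qed
  also have "\<dots> = Pot F M B + (\<Sum>a\<in>A. Dg F M B a) / 2"
    unfolding Pot_def Dg_sum[OF assms(1,2)] by (simp add: sum.distrib sum_divide_distrib)
  finally show ?thesis .
qed

lemma breaker_pot: assumes "finite F"
  shows "Pot F M (insert e B) = Pot F M B - Dg F M B e"
proof -
  have fl: "finite (live F B)" using assms by (simp add: live_def)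
  have "live F (insert e B) = live F B - {W\<in>live F B. e \<in> W}" by (auto simp: live_def)
  thus ?thesis unfolding Pot_def Dg_def using fl
    by (simp add: sum_diff)
qed

lemma breaker_dg: assumes "finite F"
  shows "Dg F M (insert e B) a \<le> Dg F M B a"
  unfolding Dg_def using assms
  by (intro sum_mono2) (auto simp: live_def phi_nonneg)

lemma game:
  assumes X: "finite X" and FX: "\<forall>W\<in>F. W \<subseteq> X"
  shows "M \<subseteq> X \<Longrightarrow> B \<subseteq> X \<Longrightarrow> M \<inter> B = {} \<Longrightarrow> Inv X F M B \<Longrightarrow> breaker_wins X F M B"
proof (induction "card (X - (M \<union> B))" arbitrary: M B rule: less_induct)
  case (less M B)
  have fF: "finite F" using X FX by (meson Pow_iff finite_Pow_iff finite_subset subsetI)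
  have fW: "\<forall>W\<in>F. finite W" using X FX finite_subset by blast
  show ?case
  proof (rule breaker_wins.step, intro allI impI conjI)
    fix A assume A: "A \<subseteq> X - (M \<union> B) \<and> card A = min 2 (card (X - (M \<union> B)))"
    have fA: "finite A" using A X finite_subset by blast
    have cA: "card A \<le> 2" using A by simp
    have AM: "A \<inter> M = {}" using A by blast
    have ms: "Pot F (M \<union> A) B \<le> Pot F M B + (\<Sum>a\<in>A. Dg F M B a) / 2"
      by (rule maker_step[OF fA fF cA AM fW])
    have inv1: "Pot F M B < 1" and inv2: "\<And>a. a \<in> X - (M \<union> B) \<Longrightarrow> Pot F M B + Dg F M B a < 1"
      using less.prems(4) by (auto simp: Inv_def)
    have P1: "Pot F (M \<union> A) B < 1"
    proof -
      have "card A = 0 \<or> card A = 1 \<or> card A = 2" using cA by auto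
      moreover
      { assume "card A = 0" hence "A = {}" using fA by simp
        hence ?thesis using ms inv1 by simp }
      moreover
      { assume "card A = 1" then obtain a where "A = {a}" by (meson card_1_singletonE)
        hence "a \<in> X - (M \<union> B)" using A by blast
        hence "Pot F M B + Dg F M B a < 1" by (rule inv2)
        moreover have "(\<Sum>a\<in>A. Dg F M B a) = Dg F M B a" using \<open>A = {a}\<close> by simp
        ultimately have ?thesis using ms Dg_nonneg[of F M B a] by linarith }
      moreover
      { assume "card A = 2" then obtain a b where "A = {a,b}" "a \<noteq> b" by (meson card_2_iff)
        hence "a \<in> X - (M \<union> B)" "b \<in> X - (M \<union> B)" using A by blast+
        hence "Pot F M B + Dg F M B a < 1" "Pot F M B + Dg F M B b < 1" by (auto intro: inv2)
        moreover have "(\<Sum>a\<in>A. Dg F M B a) = Dg F M B a + Dg F M B b"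
          using \<open>A = {a,b}\<close> \<open>a \<noteq> b\<close> by simp
        ultimately have ?thesis using ms by linarith }
      ultimately show ?thesis by blast
    qed
    show "\<not> (\<exists>W\<in>F. W \<subseteq> M \<union> A)"
    proof
      assume "\<exists>W\<in>F. W \<subseteq> M \<union> A"
      then obtain W where W: "W \<in> F" "W \<subseteq> M \<union> A" by blast
      have "W \<inter> B = {}" using W less.prems(3) A by blast
      from Pot_ge[OF fF W(1) this W(2)] P1 show False by simp
    qed
    let ?R = "X - (M \<union> A \<union> B)"
    show "?R = {} \<or> (\<exists>e \<in> ?R. breaker_wins X F (M \<union> A) (insert e B))"
    proof (cases "?R = {}")
      case True thus ?thesis by simp
    next
      case False
      have fR: "finite ?R" using X by simp
      let ?f = "Dg F (M \<union> A) B"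
      have "Max (?f ` ?R) \<in> ?f ` ?R" using fR False by (intro Max_in) auto
      then obtain e where e: "e \<in> ?R" "?f e = Max (?f ` ?R)" by (metis imageE)
      have emax: "\<And>a. a \<in> ?R \<Longrightarrow> ?f a \<le> ?f e" using e fR by simp
      have "breaker_wins X F (M \<union> A) (insert e B)"
      proof (rule less.hyps)
        show "card (X - (M \<union> A \<union> insert e B)) < card (X - (M \<union> B))"
        proof (rule psubset_card_mono)
          show "finite (X - (M \<union> B))" using X by simp
          show "X - (M \<union> A \<union> insert e B) \<subset> X - (M \<union> B)"
            using e by blast
        qed
        show "M \<union> A \<subseteq> X" using less.prems A by blast
        show "insert e B \<subseteq> X" using less.prems e by blast
        show "(M \<union> A) \<inter> insert e B = {}" using less.prems A e by blast
        have bp: "Pot F (M \<union> A) (insert e B) = Pot F (M \<union> A) B - ?f e"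
          by (rule breaker_pot[OF fF])
        show "Inv X F (M \<union> A) (insert e B)"
          unfolding Inv_def
        proof (intro conjI ballI)
          show "Pot F (M \<union> A) (insert e B) < 1" using bp P1 Dg_nonneg[of F "M \<union> A" B e] by simp
          fix a assume a: "a \<in> X - (M \<union> A \<union> insert e B)"
          hence "a \<in> ?R" by blast
          from emax[OF this] breaker_dg[OF fF, of "M \<union> A" e B a] bp P1
          show "Pot F (M \<union> A) (insert e B) + Dg F (M \<union> A) (insert e B) a < 1" by simp
        qed
      qed
      thus ?thesis using e by blast
    qed
  qed
qed



lemma breaker_start:
  assumes X: "finite X" and FX: "\<forall>W\<in>F. W \<subseteq> X" and S: "2 * (\<Sum>W\<in>F. phi {} W) < 1"
  shows "breaker_wins X F {} {}"
proof (rule game[OF X FX])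
  have fF: "finite F" using X FX by (meson Pow_iff finite_Pow_iff finite_subset subsetI)
  have l: "live F {} = F" by (auto simp: live_def)
  have "\<And>a. Dg F {} {} a \<le> Pot F {} {}"
    unfolding Dg_def Pot_def using fF by (intro sum_mono2) (auto simp: live_def phi_nonneg)
  moreover have nn: "0 \<le> (\<Sum>W\<in>F. phi {} W)" by (simp add: sum_nonneg phi_nonneg)
  moreover have "Pot F {} {} = (\<Sum>W\<in>F. phi {} W)" unfolding Pot_def l ..
  ultimately have P: "Pot F {} {} < 1" using S by linarith
  have "\<And>a. Pot F {} {} + Dg F {} {} a < 1"
  proof -
    fix a have "Dg F {} {} a \<le> Pot F {} {}" by fact
    thus "Pot F {} {} + Dg F {} {} a < 1" using S \<open>Pot F {} {} = _\<close> by linarith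
  qed
  thus "Inv X F {} {}" unfolding Inv_def using P by blast
qed auto

lemma tour_card: assumes "tournament k T" shows "2 * card T = k * (k - 1)"
proof -
  let ?D = "({0..<k}\<times>{0..<k}) - (\<lambda>a. (a,a)) ` {0..<k}"
  have T: "T \<subseteq> {0..<k}\<times>{0..<k}" "\<And>a. (a,a) \<notin> T"
    "\<And>a b. a<k \<Longrightarrow> b<k \<Longrightarrow> a \<noteq> b \<Longrightarrow> (a, b) \<in> T \<longleftrightarrow> (b, a) \<notin> T"
    using assms unfolding tournament_def by blast+
  have DU: "?D = T \<union> prod.swap ` T"
  proof
    show "?D \<subseteq> T \<union> prod.swap ` T"
    proof
      fix p assume "p \<in> ?D"
      then obtain a b where p: "p = (a,b)" "a<k" "b<k" "a\<noteq>b" by (cases p) (auto simp: image_iff)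
      show "p \<in> T \<union> prod.swap ` T"
      proof (cases "(a,b) \<in> T")
        case True thus ?thesis using p by simp
      next
        case False
        hence "(b,a) \<in> T" using T(3)[OF p(2,3,4)] by blast
        hence "prod.swap (b,a) \<in> prod.swap ` T" by blast
        thus ?thesis using p by simp
      qed
    qed
    show "T \<union> prod.swap ` T \<subseteq> ?D" using T(1,2) by auto
  qed
  have disj: "T \<inter> prod.swap ` T = {}"
  proof (rule ccontr)
    assume "T \<inter> prod.swap ` T \<noteq> {}"
    then obtain a b where ab: "(a,b) \<in> T" "(b,a) \<in> T" by auto
    hence "a<k" "b<k" "a \<noteq> b" using T(1,2) by auto
    thus False using T(3) ab by blast
  qed
  have fT: "finite T" using T(1) finite_subset by blast
  have cs: "card (prod.swap ` T) = card T" by (simp add: card_image)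
  have c1: "card ((\<lambda>a. (a,a)) ` {0..<k}) = k" by (simp add: card_image inj_on_def)
  have s1: "(\<lambda>a. (a,a)) ` {0..<k} \<subseteq> {0..<k}\<times>{0..<k}" by auto
  have "card ?D = k*k - k"
    using card_Diff_subset[OF _ s1] c1 by (simp add: card_cartesian_product)
  moreover have "card ?D = card T + card T" using DU disj fT cs
    using card_Un_disjoint[of T "prod.swap ` T"] by simp
  ultimately show ?thesis by (simp add: diff_mult_distrib2)
qed

definition emb :: "(nat \<Rightarrow> nat) \<Rightarrow> nat \<times> nat \<Rightarrow> nat \<times> nat" where
  "emb f = (\<lambda>(a, b). (f a, f b))"

lemma copies_eq: "copies n k T = {emb f ` T | f. inj_on f {0..<k} \<and> f ` {0..<k} \<subseteq> {0..<n}}"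
  by (simp add: copies_def emb_def)

lemma copies_sub: assumes "tournament k T" "W \<in> copies n k T"
  shows "W \<subseteq> board n" and "card W = card T"
proof -
  obtain f where f: "W = emb f ` T" "inj_on f {0..<k}" "f ` {0..<k} \<subseteq> {0..<n}"
    using assms(2) by (auto simp: copies_eq)
  have T: "T \<subseteq> {0..<k}\<times>{0..<k}" "\<And>a. (a,a) \<notin> T"
    using assms unfolding tournament_def by blast+
  show "W \<subseteq> board n"
  proof
    fix p assume "p \<in> W"
    then obtain a b where ab: "(a,b) \<in> T" "p = (f a, f b)" using f by (auto simp: emb_def)
    have "a < k" "b < k" "a \<noteq> b" using T ab(1) by auto
    hence "f a \<noteq> f b" "f a < n" "f b < n" using f(2,3) by (auto simp: inj_on_def image_subset_iff)
    thus "p \<in> board n" using ab by (simp add: board_def)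
  qed
  have "inj_on (emb f) T"
  proof (rule inj_onI)
    fix p q assume "p \<in> T" "q \<in> T" "emb f p = emb f q"
    moreover obtain a b c d where "p = (a,b)" "q = (c,d)" by (cases p, cases q)
    ultimately have "a < k" "b < k" "c < k" "d < k" "f a = f c" "f b = f d"
      using T(1) by (auto simp: emb_def)
    thus "p = q" using f(2) \<open>p = (a,b)\<close> \<open>q = (c,d)\<close>
      by (simp add: inj_on_def)
  qed
  thus "card W = card T" using f(1) by (simp add: card_image)
qed

lemma copies_card: assumes "tournament k T" shows "card (copies n k T) \<le> n ^ k"
proof -
  have T: "T \<subseteq> {0..<k}\<times>{0..<k}" using assms unfolding tournament_def by blast
  have "copies n k T \<subseteq> (\<lambda>f. emb f ` T) ` ({0..<k} \<rightarrow>\<^sub>E {0..<n})"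
  proof
    fix W assume "W \<in> copies n k T"
    then obtain f where f: "W = emb f ` T" "f ` {0..<k} \<subseteq> {0..<n}"
      by (auto simp: copies_eq)
    have "emb (restrict f {0..<k}) ` T = emb f ` T"
      using T by (intro image_cong refl) (auto simp: emb_def)
    moreover have "restrict f {0..<k} \<in> {0..<k} \<rightarrow>\<^sub>E {0..<n}" using f(2) by auto
    ultimately show "W \<in> (\<lambda>f. emb f ` T) ` ({0..<k} \<rightarrow>\<^sub>E {0..<n})"
      using f(1) by (metis image_eqI)
  qed
  hence "card (copies n k T) \<le> card ((\<lambda>f. emb f ` T) ` ({0..<k} \<rightarrow>\<^sub>E {0..<n}))"
    by (intro card_mono finite_imageI finite_PiE) auto
  also have "\<dots> \<le> card ({0..<k} \<rightarrow>\<^sub>E {0..<n})" by (rule card_image_le) (auto intro: finite_PiE)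
  also have "\<dots> = n ^ k" by (simp add: card_PiE)
  finally show ?thesis .
qed



lemma arith_main:
  fixes n k c :: nat
  assumes n: "n \<ge> 2" and k: "real k \<ge> 4 * log 2 (real n) + 2" and c: "2 * c = k * (k - 1)"
  shows "2 * real n ^ k < sqrt 2 ^ c"
proof -
  define L where "L = log 2 (real n)"
  have L1: "L \<ge> 1" using n unfolding L_def by simp
  have k1: "real k \<ge> 1" using k L1 L_def by linarith
  have ck: "real c = real k * (real k - 1) / 2"
  proof -
    have "real (2 * c) = real (k * (k - 1))" using c by simp
    thus ?thesis using k1 by (simp add: of_nat_diff)
  qed
  have "real k * (real k - 1) \<ge> real k * (4 * L + 1)"
    using k k1 L_def by (intro mult_left_mono) auto
  hence e1: "real k * real k - real k \<ge> 4 * (real k * L) + real k" by (simp add: algebra_simps)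
  have e2: "real c * 2 = real k * real k - real k" using ck by (simp add: algebra_simps)
  have k6: "real k \<ge> 6" using k L1 L_def by linarith
  have ineq: "1 + real k * L < real c / 2" using e1 e2 k6 by linarith
  have "real n = 2 powr L" using n unfolding L_def by simp
  hence "real n ^ k = 2 powr (L * real k)"
    by (simp add: powr_power mult.commute)
  hence lhs: "2 * real n ^ k = 2 powr (1 + real k * L)"
    by (simp add: powr_add mult.commute)
  have "sqrt 2 ^ c = (2 powr (1/2)) ^ c" by (simp add: powr_half_sqrt)
  also have "\<dots> = 2 powr (1/2 * real c)" by (simp add: powr_power)
  finally have rhs: "sqrt 2 ^ c = 2 powr (real c / 2)" by simp
  show ?thesis unfolding lhs rhs using ineq by simp
qed



theorem mainTheorem6:
  shows "\<exists>N. \<forall>n\<ge>N. \<forall>k. real k \<ge> 4 * log 2 (real n) + 2 \<longrightarrow>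
           (\<forall>T. tournament k T \<longrightarrow> breaker_wins (board n) (copies n k T) {} {})"
proof (intro exI[of _ 2] allI impI)
  fix n k :: nat and T
  assume n: "2 \<le> n" and k: "4 * log 2 (real n) + 2 \<le> real k" and T: "tournament k T"
  let ?F = "copies n k T"
  let ?c = "card T"
  have fb: "finite (board n)"
    by (rule finite_subset[of _ "{0..<n}\<times>{0..<n}"]) (auto simp: board_def)
  have FX: "\<forall>W\<in>?F. W \<subseteq> board n" using copies_sub(1)[OF T] by blast
  have "(\<Sum>W\<in>?F. phi {} W) = (\<Sum>W\<in>?F. 1 / sqrt 2 ^ ?c)"
    by (rule sum.cong[OF refl]) (simp add: phi_def copies_sub(2)[OF T])
  also have "\<dots> = real (card ?F) / sqrt 2 ^ ?c" by simp
  also have "\<dots> \<le> real n ^ k / sqrt 2 ^ ?c"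
    using copies_card[OF T, of n] by (intro divide_right_mono) (simp_all add: of_nat_power[symmetric] del: of_nat_power)
  finally have s: "(\<Sum>W\<in>?F. phi {} W) \<le> real n ^ k / sqrt 2 ^ ?c" .
  have a: "2 * real n ^ k < sqrt 2 ^ ?c" by (rule arith_main[OF n k tour_card[OF T]])
  have "2 * (real n ^ k / sqrt 2 ^ ?c) < 1" using a by (simp add: field_simps)
  hence "2 * (\<Sum>W\<in>?F. phi {} W) < 1" using s by linarith
  thus "breaker_wins (board n) ?F {} {}" by (rule breaker_start[OF fb FX])
qed


end
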